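(* Let $k$ be an algebraically closed field of characteristic $0$, $d\ge3$, and let $(V,\Theta)$ be a regular indecomposable $d$-linear space over $k$ with maximal center. Let $\mathbf{G}$ be the group of $k$-algebra automorphisms of $\mathrm{Cent}_k(\Theta)$ and $\chi:\mathcal{O}(\Theta)\to\mathbf{G}$, $\chi(\sigma)(f)=\sigma f\sigma^{-1}$. Let $\mu_d=\{\zeta\in k:\zeta^d=1\}$, identified with $\{\zeta\,\mathrm{id}_V\}\subseteq\mathcal{O}(\Theta)$. Then the sequence $1\to\mu_d\to\mathcal{O}(\Theta)\xrightarrow{\chi}\mathbf{G}$ is exact, i.e. $\ker\chi=\mu_d$.
   Context: A $d$-linear space is $(V,\Theta)$ with $V$ finite-dimensional over $k$ and $\Theta:V^d\to k$ symmetric $d$-linear. It is regular if $\Theta(w,u_2,\dots,u_d)=0$ for all $u_i$ implies $w=0$. Orthogonal sum: $(V_1\oplus V_2,\Theta_1\perp\Theta_2)$ with $(\Theta_1\perp\Theta_2)(v_1+u_1,\dots,v_d+u_d)=\Theta_1(v_1,\dots,v_d)+\Theta_2(u_1,\dots,u_d)$; the space is indecomposable if not isomorphic to an orthogonal sum of two (nonzero) $d$-linear spaces. Center: $\mathrm{Cent}_k(\Theta)=\{f\in\mathrm{End}_k(V):\Theta(f u_1,u_2,\dots,u_d)=\Theta(u_1,fu_2,\dots,u_d)\ \forall u_i\}$; the space has maximal center if $\mathrm{Cent}_k(\Theta)$ is a maximal commutative subalgebra of $\mathrm{End}_k(V)$. $\mathcal{O}(\Theta)=\{\sigma\in GL_k(V):\Theta(\sigma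 u_1,\dots,\sigma u_d)=\Theta(u_1,\dots,u_d)\ \forall u_i\}$. *)

theory Defs
  imports "HOL-Analysis.Analysis" "HOL-Computational_Algebra.Polynomial"
begin

text \<open>Vector space V = k^n (n = CARD('n) >= 1); endomorphisms = n x n matrices.
  A d-ary form is a function Theta on argument tuples u :: nat => k^n, of which
  only the slots 0..d-1 are used.\<close>

definition alg_closed_field :: "'k::field itself \<Rightarrow> bool" where
  "alg_closed_field _ \<longleftrightarrow> (\<forall>p :: 'k poly. degree p \<ge> 1 \<longrightarrow> (\<exists>x. poly p x = 0))"

definition d_linear_form :: "nat \<Rightarrow> ((nat \<Rightarrow> 'k::field ^'n) \<Rightarrow> 'k) \<Rightarrow> bool" where
  "d_linear_form d \<Theta> \<longleftrightarrow>
     (\<forall>u w. (\<forall>i<d. u i = w i) \<longrightarrow> \<Theta> u = \<Theta> w) \<and>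
     (\<forall>u i x y. i < d \<longrightarrow> \<Theta> (u(i := x + y)) = \<Theta> (u(i := x)) + \<Theta> (u(i := y))) \<and>
     (\<forall>u i c x. i < d \<longrightarrow> \<Theta> (u(i := c *s x)) = c * \<Theta> (u(i := x)))"

definition symmetric_form :: "nat \<Rightarrow> ((nat \<Rightarrow> 'k::field ^'n) \<Rightarrow> 'k) \<Rightarrow> bool" where
  "symmetric_form d \<Theta> \<longleftrightarrow> (\<forall>u p. p permutes {..<d} \<longrightarrow> \<Theta> (u \<circ> p) = \<Theta> u)"

definition regular_form :: "nat \<Rightarrow> ((nat \<Rightarrow> 'k::field ^'n) \<Rightarrow> 'k) \<Rightarrow> bool" where
  "regular_form d \<Theta> \<longleftrightarrow> (\<forall>w. (\<forall>u. \<Theta> (u(0 := w)) = 0) \<longrightarrow> w = 0)"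

definition is_subspace :: "('k::field ^'n) set \<Rightarrow> bool" where
  "is_subspace W \<longleftrightarrow> 0 \<in> W \<and> (\<forall>x\<in>W. \<forall>y\<in>W. x + y \<in> W) \<and> (\<forall>c. \<forall>x\<in>W. c *s x \<in> W)"

text \<open>Internal orthogonal decomposition into two nonzero subspaces; being isomorphic to an
  orthogonal sum of two nonzero d-linear spaces is equivalent to this.\<close>
definition decomposable_form :: "nat \<Rightarrow> ((nat \<Rightarrow> 'k::field ^'n) \<Rightarrow> 'k) \<Rightarrow> bool" where
  "decomposable_form d \<Theta> \<longleftrightarrow>
     (\<exists>V1 V2. is_subspace V1 \<and> is_subspace V2 \<and> V1 \<noteq> {0} \<and> V2 \<noteq> {0} \<and>
        V1 \<inter> V2 = {0} \<and> (\<forall>x. \<exists>a\<in>V1. \<exists>b\<in>V2. x = a + b) \<and>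
        (\<forall>v w. (\<forall>i<d. v i \<in> V1 \<and> w i \<in> V2) \<longrightarrow> \<Theta> (\<lambda>i. v i + w i) = \<Theta> v + \<Theta> w))"

definition indecomposable_form :: "nat \<Rightarrow> ((nat \<Rightarrow> 'k::field ^'n) \<Rightarrow> 'k) \<Rightarrow> bool" where
  "indecomposable_form d \<Theta> \<longleftrightarrow> \<not> decomposable_form d \<Theta>"

definition cent :: "((nat \<Rightarrow> 'k::field ^'n) \<Rightarrow> 'k) \<Rightarrow> ('k ^'n ^'n) set" where
  "cent \<Theta> = {f. \<forall>u. \<Theta> (u(0 := f *v u 0)) = \<Theta> (u(1 := f *v u 1))}"

definition mscale :: "'k::field \<Rightarrow> 'k ^'n ^'n \<Rightarrow> 'k ^'n ^'n" where
  "mscale c A = (\<chi> i j. c * A $ i $ j)"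

definition comm_subalgebra :: "('k::field ^'n ^'n) set \<Rightarrow> bool" where
  "comm_subalgebra A \<longleftrightarrow> mat 1 \<in> A \<and> (\<forall>x\<in>A. \<forall>y\<in>A. x + y \<in> A \<and> x ** y \<in> A \<and> x ** y = y ** x)
     \<and> (\<forall>c. \<forall>x\<in>A. mscale c x \<in> A)"

definition maximal_comm_subalgebra :: "('k::field ^'n ^'n) set \<Rightarrow> bool" where
  "maximal_comm_subalgebra A \<longleftrightarrow> comm_subalgebra A \<and> (\<forall>B. comm_subalgebra B \<and> A \<subseteq> B \<longrightarrow> B = A)"

definition has_maximal_center :: "((nat \<Rightarrow> 'k::field ^'n) \<Rightarrow> 'k) \<Rightarrow> bool" where
  "has_maximal_center \<Theta> \<longleftrightarrow> maximal_comm_subalgebra (cent \<Theta>)"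

definition alg_auts :: "('k::field ^'n ^'n) set \<Rightarrow> ('k ^'n ^'n \<Rightarrow> 'k ^'n ^'n) set" where
  "alg_auts A = {\<phi>. bij_betw \<phi> A A \<and> \<phi> (mat 1) = mat 1 \<and>
     (\<forall>x\<in>A. \<forall>y\<in>A. \<phi> (x + y) = \<phi> x + \<phi> y \<and> \<phi> (x ** y) = \<phi> x ** \<phi> y) \<and>
     (\<forall>c. \<forall>x\<in>A. \<phi> (mscale c x) = mscale c (\<phi> x))}"

definition orth_group :: "((nat \<Rightarrow> 'k::field ^'n) \<Rightarrow> 'k) \<Rightarrow> ('k ^'n ^'n) set" where
  "orth_group \<Theta> = {\<sigma>. invertible \<sigma> \<and> (\<forall>u. \<Theta> (\<lambda>i. \<sigma> *v u i) = \<Theta> u)}"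

definition chi :: "'k::field ^'n ^'n \<Rightarrow> 'k ^'n ^'n \<Rightarrow> 'k ^'n ^'n" where
  "chi \<sigma> f = \<sigma> ** f ** matrix_inv \<sigma>"

definition roots_of_unity_id :: "nat \<Rightarrow> ('k::field ^'n ^'n) set" where
  "roots_of_unity_id d = {mat \<zeta> | \<zeta>. \<zeta> ^ d = 1}"

end

theory Submission
  imports Defs
begin

lemma minv: fixes s :: "'k::field^'n^'n" assumes "invertible s"
  shows "s ** matrix_inv s = mat 1" "matrix_inv s ** s = mat 1"
  using someI_ex[OF assms[unfolded invertible_def]] unfolding matrix_inv_def by auto

lemma ite_mult1: "(if P then c else 0) * (x::'k::field) = (if P then c * x else 0)" by simp
lemma ite_mult2: "(x::'k::field) * (if P then c else 0) = (if P then x * c else 0)" by simp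

lemma mat_mul_eq: "(mat c :: 'k::field^'n^'n) ** (A::'k^'n^'n) = mscale c A"
  by (simp add: matrix_matrix_mult_def mat_def mscale_def vec_eq_iff ite_mult1)

lemma mat_mul_eq2: "(A::'k::field^'n^'n) ** (mat c :: 'k::field^'n^'n) = mscale c A"
  by (simp add: matrix_matrix_mult_def mat_def mscale_def vec_eq_iff ite_mult2 mult.commute)

lemma mat_comm: "(mat c :: 'k::field^'n^'n) ** (A::'k^'n^'n) = A ** mat c"
  using mat_mul_eq[of c A] mat_mul_eq2[of A c] by simp

lemma mat_mat: "(mat c :: 'k::field^'n^'n) ** mat e = mat (c * e)"
  unfolding mat_mul_eq by (simp add: mscale_def mat_def vec_eq_iff)

lemma mat_add: "(mat c :: 'k::field^'n^'n) + mat e = mat (c + e)"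
  by (simp add: mat_def vec_eq_iff)

lemma mat_diff: "(mat c :: 'k::field^'n^'n) - mat e = mat (c - e)"
  by (simp add: mat_def vec_eq_iff)

lemma mat_inj: "(mat c :: 'k::field^'n^'n) = mat e \<Longrightarrow> c = e"
  by (simp add: mat_def vec_eq_iff) (metis)

lemma mscale_mat1: "mscale c (mat 1 :: 'k::field^'n^'n) = mat c"
  by (simp add: mscale_def mat_def vec_eq_iff)

lemma matrix_diff_ldistrib: "(A::'k::field^'n^'n) ** (B - C) = A ** B - A ** C"
  by (simp add: matrix_matrix_mult_def vec_eq_iff algebra_simps sum_subtractf)

lemma matrix_diff_rdistrib: "((B::'k::field^'n^'n) - C) ** A = B ** A - C ** A"
  by (simp add: matrix_matrix_mult_def vec_eq_iff algebra_simps sum_subtractf)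

lemma matrix_add_rdistrib': "((B::'k::field^'n^'n) + C) ** A = B ** A + C ** A"
  by (simp add: matrix_matrix_mult_def vec_eq_iff algebra_simps sum.distrib)

lemma mat_vec: "(mat c :: 'k::field^'n^'n) *v x = c *s x"
  by (simp add: matrix_vector_mult_def mat_def vec_eq_iff ite_mult1)

fun mpow :: "'k::field^'n^'n \<Rightarrow> nat \<Rightarrow> 'k^'n^'n" where
  "mpow f 0 = mat 1" | "mpow f (Suc m) = f ** mpow f m"

lemma mpow_comm: "mpow f m ** f = f ** mpow f m"
  by (induction m) (simp_all, metis matrix_mul_assoc)

lemma mpow_idem: "f ** f = f \<Longrightarrow> m \<ge> 1 \<Longrightarrow> mpow f m = f"
  by (induction m) (auto simp: le_Suc_eq)

lemma mpow_mat: "mpow (mat c :: 'k::field^'n^'n) m = mat (c ^ m)"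
  by (induction m) (auto simp: mat_mat)

lemma matrix_mul_rzero': "(A::'k::field^'n^'n) ** 0 = 0"
  by (simp add: matrix_matrix_mult_def vec_eq_iff)

lemma matrix_mul_lzero': "0 ** (A::'k::field^'n^'n) = 0"
  by (simp add: matrix_matrix_mult_def vec_eq_iff)

lemma mscale_l: "mscale c (A::'k::field^'n^'n) ** B = mscale c (A ** B)"
  by (simp add: matrix_matrix_mult_def mscale_def vec_eq_iff sum_distrib_left mult.assoc)

lemma mscale_r: "(A::'k::field^'n^'n) ** mscale c B = mscale c (A ** B)"
  by (simp add: matrix_matrix_mult_def mscale_def vec_eq_iff sum_distrib_left mult_ac)

lemma mscale_mscale: "mscale c (mscale e (A::'k::field^'n^'n)) = mscale (c * e) A"
  by (simp add: mscale_def vec_eq_iff mult.assoc)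

lemma mscale_1: "mscale 1 (A::'k::field^'n^'n) = A"
  by (simp add: mscale_def vec_eq_iff)

lemma mscale_0: "mscale c (0::'k::field^'n^'n) = 0"
  by (simp add: mscale_def vec_eq_iff)

lemma mscale_diff: "mscale c ((A::'k::field^'n^'n) - B) = mscale c A - mscale c B"
  by (simp add: mscale_def vec_eq_iff algebra_simps)

definition mev :: "'k::field poly \<Rightarrow> 'k^'n^'n \<Rightarrow> 'k^'n^'n" where
  "mev p A = fold_coeffs (\<lambda>a M. mat a + A ** M) p 0"

lemma mev_0[simp]: "mev 0 A = 0" by (simp add: mev_def)

lemma mev_pCons: "mev (pCons a p) A = mat a + A ** mev p A"
proof (cases "p = 0 \<and> a = 0")
  case True then show ?thesis by (simp add: mev_def matrix_mul_rzero')
next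
  case False then show ?thesis
    by (cases "p = 0") (auto simp: mev_def)
qed

lemma mev_add: "mev (p + q) A = mev p A + mev q A"
proof (induction p arbitrary: q rule: pCons_induct)
  case 0 then show ?case by simp
next
  case (pCons a p)
  obtain b q' where q: "q = pCons b q'" by (cases q) auto
  show ?case using pCons.IH[of q'] by (simp add: q mev_pCons matrix_add_ldistrib mat_add[symmetric] algebra_simps)
qed

lemma mev_smult: "mev (smult c p) (A::'k::field^'n^'n) = mat c ** mev p A"
proof (induction p rule: pCons_induct)
  case 0 then show ?case by (simp add: matrix_mul_rzero')
next
  case (pCons a p)
  then show ?case
    by (simp add: mev_pCons matrix_add_ldistrib mat_mul_eq mscale_r) (simp add: mscale_def mat_def vec_eq_iff)
qed

lemma mev_const: "mev [:c:] (A::'k::field^'n^'n) = mat c"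
  by (simp add: mev_pCons matrix_mul_rzero')

lemma mev_diff: "mev (p - q) A = mev p A - mev q A"
  using mev_add[of "p - q" q A] by simp

lemma mev_linear: "mev ([:-z, 1:] * q) (A::'k::field^'n^'n) = A ** mev q A - mat z ** mev q A"
proof -
  have "[:-z, 1:] * q = smult (-z) q + pCons 0 q" by simp
  then have "mev ([:-z, 1:] * q) A = mev (smult (-z) q) A + mev (pCons 0 q) A" by (simp only: mev_add)
  also have "\<dots> = mat (-z) ** mev q A + (mat 0 + A ** mev q A)" by (simp only: mev_smult mev_pCons)
  finally show ?thesis
    by (simp add: mat_mul_eq mscale_def vec_eq_iff)
qed

lemma mev_monom: "mev (monom c n) (A::'k::field^'n^'n) = mat c ** mpow A n"
proof (induction n)
  case 0 then show ?case by (simp add: monom_0 mev_const)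
next
  case (Suc n) then show ?case
    by (simp add: monom_Suc mev_pCons mat_mul_eq mscale_r)
qed

lemma mev_in: assumes S: "comm_subalgebra S" and A: "A \<in> S" shows "mev p A \<in> S"
proof (induction p rule: pCons_induct)
  case 0
  have "mscale 0 (mat 1) \<in> S" using S unfolding comm_subalgebra_def by blast
  then show ?case by (simp add: mscale_mat1)
next
  case (pCons a p)
  have "mscale a (mat 1) \<in> S" using S unfolding comm_subalgebra_def by blast
  then have "mat a \<in> S" by (simp add: mscale_mat1)
  moreover have "A ** mev p A \<in> S" using S A pCons.IH unfolding comm_subalgebra_def by blast
  ultimately show ?case using S by (simp add: mev_pCons comm_subalgebra_def)
qed

lemma scalar_of_root:
  fixes \<sigma> :: "'k::field^'n^'n"
  assumes alg: "alg_closed_field TYPE('k)" and S: "comm_subalgebra S" and sS: "\<sigma> \<in> S"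
    and dich: "\<And>e. e \<in> S \<Longrightarrow> e ** e = e \<Longrightarrow> e = 0 \<or> e = mat 1"
  shows "p \<noteq> 0 \<Longrightarrow> (\<forall>z. poly p z = 0 \<longrightarrow> poly (pderiv p) z \<noteq> 0) \<Longrightarrow> mev p \<sigma> = 0 \<Longrightarrow> \<exists>c. \<sigma> = mat c"
proof (induction "degree p" arbitrary: p rule: less_induct)
  case less
  have comm: "x ** y = y ** x" if "x \<in> S" "y \<in> S" for x y using S that unfolding comm_subalgebra_def by blast
  have mulS: "x ** y \<in> S" if "x \<in> S" "y \<in> S" for x y using S that unfolding comm_subalgebra_def by blast
  have matS: "mat c \<in> S" for c
    using S unfolding comm_subalgebra_def by (metis mscale_mat1)
  show ?case
  proof (cases "degree p = 0")
    case True
    then obtain c where p: "p = [:c:]" by (metis degree_eq_zeroE)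
    then have "c \<noteq> 0" using less.prems by auto
    moreover have "mat c = (mat 0 :: 'k^'n^'n)" using less.prems(3) by (simp add: p mev_const)
    ultimately show ?thesis using mat_inj by blast
  next
    case False
    then obtain z where z: "poly p z = 0" using alg unfolding alg_closed_field_def by force
    then obtain q where pq: "p = [:-z, 1:] * q" using poly_eq_0_iff_dvd by (metis dvdE)
    have q0: "q \<noteq> 0" using less.prems pq by auto
    have "degree p = degree [:-z, 1:] + degree q" unfolding pq by (rule degree_mult_eq) (use q0 in auto)
    then have degq: "degree q < degree p" by simp
    have dp: "poly (pderiv p) x = (x - z) * poly (pderiv q) x + poly q x" for x
      by (simp add: pq pderiv_diff pderiv_smult pderiv_pCons algebra_simps)
    define qz where "qz = poly q z"
    have qz0: "qz \<noteq> 0" using less.prems(2) z dp[of z] unfolding qz_def by force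
    have "poly (q - [:qz:]) z = 0" by (simp add: qz_def)
    then obtain r where qr: "q - [:qz:] = [:-z, 1:] * r" using poly_eq_0_iff_dvd by (metis dvdE)
    define Q where "Q = mev q \<sigma>"
    define R where "R = mev r \<sigma>"
    have QS: "Q \<in> S" unfolding Q_def by (rule mev_in[OF S sS])
    have RS: "R \<in> S" unfolding R_def by (rule mev_in[OF S sS])
    have QR: "Q - mat qz = \<sigma> ** R - mat z ** R"
      using arg_cong[OF qr, of "\<lambda>p. mev p \<sigma>"] unfolding mev_diff mev_const mev_linear Q_def R_def .
    have P0: "(\<sigma> - mat z) ** Q = 0"
      using less.prems(3) unfolding pq mev_linear Q_def matrix_diff_rdistrib .
    have Qeq: "Q = mat qz + (\<sigma> - mat z) ** R" using QR by (simp add: matrix_diff_rdistrib algebra_simps)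
    have "Q ** Q = Q ** mat qz + Q ** ((\<sigma> - mat z) ** R)"
      by (subst (2) Qeq) (simp add: matrix_add_ldistrib)
    also have "Q ** ((\<sigma> - mat z) ** R) = ((\<sigma> - mat z) ** Q) ** R"
    proof -
      have "Q ** (\<sigma> - mat z) = (\<sigma> - mat z) ** Q"
        by (simp add: matrix_diff_ldistrib matrix_diff_rdistrib comm[OF QS sS] mat_comm)
      then show ?thesis by (metis matrix_mul_assoc)
    qed
    finally have QQ: "Q ** Q = mscale qz Q" using P0 by (simp add: mat_mul_eq2 matrix_mul_lzero')
    define e where "e = mscale (1/qz) Q"
    have eS: "e \<in> S" unfolding e_def using S QS unfolding comm_subalgebra_def by blast
    have "e ** e = e" using qz0 by (simp add: e_def mscale_l mscale_r QQ mscale_mscale)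
    then have "e = 0 \<or> e = mat 1" using dich eS by blast
    then show ?thesis
    proof
      assume "e = 0"
      then have "Q = 0" using qz0 unfolding e_def
        by (metis mscale_mscale mscale_0 mscale_1 nonzero_mult_div_cancel_left div_by_1 times_divide_eq_right)
      moreover have "\<forall>x. poly q x = 0 \<longrightarrow> poly (pderiv q) x \<noteq> 0"
      proof (intro allI impI)
        fix x assume "poly q x = 0"
        then have "poly p x = 0" by (simp add: pq)
        then have "poly (pderiv p) x \<noteq> 0" using less.prems(2) by blast
        then show "poly (pderiv q) x \<noteq> 0" using dp[of x] \<open>poly q x = 0\<close> by auto
      qed
      ultimately show ?thesis using less.hyps[OF degq q0] by (simp add: Q_def)
    next
      assume "e = mat 1"
      then have "Q = mat qz" using qz0 unfolding e_def
        by (metis mscale_mscale mscale_1 mscale_mat1 nonzero_mult_div_cancel_left div_by_1 times_divide_eq_right)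
      then have "mscale qz (\<sigma> - mat z) = 0" using P0 by (simp add: mat_mul_eq2)
      then have "mscale (1/qz) (mscale qz (\<sigma> - mat z)) = 0" by (simp add: mscale_0)
      then have "\<sigma> - mat z = 0" using qz0 by (simp add: mscale_mscale mscale_1)
      then show ?thesis by auto
    qed
  qed
qed

locale dform = fixes \<Theta> :: "(nat \<Rightarrow> 'k::field ^'n) \<Rightarrow> 'k" and d :: nat
  assumes lin: "d_linear_form d \<Theta>" and sym: "symmetric_form d \<Theta>" and d2: "2 \<le> d"
begin

lemma loc: "(\<And>i. i < d \<Longrightarrow> u i = w i) \<Longrightarrow> \<Theta> u = \<Theta> w"
  using lin unfolding d_linear_form_def by blast

lemma add0: "\<Theta> (u(0 := x + y)) = \<Theta> (u(0 := x)) + \<Theta> (u(0 := y))"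
  using lin d2 unfolding d_linear_form_def by auto

lemma scale0: "\<Theta> (u(0 := c *s x)) = c * \<Theta> (u(0 := x))"
  using lin d2 unfolding d_linear_form_def by auto

lemma diff0: "\<Theta> (u(0 := x - y)) = \<Theta> (u(0 := x)) - \<Theta> (u(0 := y))"
proof -
  have "x - y = x + (-1) *s y" by (simp add: vec_eq_iff)
  then show ?thesis using add0[of u x "(-1) *s y"] scale0[of u "-1" y] by simp
qed

lemma symm: "p permutes {..<d} \<Longrightarrow> \<Theta> (u \<circ> p) = \<Theta> u"
  using sym unfolding symmetric_form_def by blast

lemma move: assumes f: "f \<in> cent \<Theta>" and i: "i < d"
  shows "\<Theta> (u(i := f *v u i)) = \<Theta> (u(0 := f *v u 0))"
proof -
  have c: "\<And>w. \<Theta> (w(0 := f *v w 0)) = \<Theta> (w(1 := f *v w 1))" using f unfolding cent_def by blast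
  consider "i = 0" | "i = 1" | "i \<ge> 2" by linarith
  then show ?thesis
  proof cases
    case 1 then show ?thesis by simp
  next
    case 2 then show ?thesis using c by simp
  next
    case 3
    define \<tau> where "\<tau> = Transposition.transpose (1::nat) i"
    have p: "\<tau> permutes {..<d}" unfolding \<tau>_def using i d2 by (intro permutes_swap_id) auto
    define w where "w = u \<circ> \<tau>"
    have t1: "\<tau> 1 = i" "\<tau> i = 1" "\<tau> 0 = 0" using 3 by (auto simp: \<tau>_def Transposition.transpose_def)
    have tt: "\<tau> \<circ> \<tau> = id" unfolding \<tau>_def by simp
    have e1: "u(i := f *v u i) \<circ> \<tau> = w(1 := f *v w 1)"
      using 3 by (auto simp: w_def \<tau>_def Transposition.transpose_def fun_eq_iff)
    have e2: "w(0 := f *v w 0) \<circ> \<tau> = u(0 := f *v u 0)"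
      using 3 by (auto simp: w_def \<tau>_def Transposition.transpose_def fun_eq_iff)
    have "\<Theta> (u(i := f *v u i)) = \<Theta> (w(1 := f *v w 1))" using symm[OF p] e1 by metis
    also have "\<dots> = \<Theta> (w(0 := f *v w 0))" using c by simp
    also have "\<dots> = \<Theta> (u(0 := f *v u 0))" using symm[OF p] e2 by metis
    finally show ?thesis .
  qed
qed

lemma powm: assumes f: "f \<in> cent \<Theta>"
  shows "m \<le> d \<Longrightarrow> \<Theta> (\<lambda>j. if j < m then f *v y j else y j) = \<Theta> (y(0 := mpow f m *v y 0))"
proof (induction m arbitrary: y)
  case 0
  then show ?case by (simp add: fun_upd_idem)
next
  case (Suc m)
  show ?case
  proof (cases "m = 0")
    case True
    then show ?thesis by (simp add: fun_eq_iff cong: if_cong)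
  next
    case False
    define u where "u = (\<lambda>j. if j < m then f *v y j else y j)"
    have "(\<lambda>j. if j < Suc m then f *v y j else y j) = u(m := f *v u m)"
      by (auto simp: u_def fun_eq_iff)
    then have "\<Theta> (\<lambda>j. if j < Suc m then f *v y j else y j) = \<Theta> (u(0 := f *v u 0))"
      using move[OF f, of m u] Suc.prems by simp
    also have "u(0 := f *v u 0) = (\<lambda>j. if j < m then f *v (y(0 := f *v y 0)) j else (y(0 := f *v y 0)) j)"
      using False by (auto simp: u_def fun_eq_iff)
    also have "\<Theta> \<dots> = \<Theta> (y(0 := mpow f m *v (f *v y 0)))"
    proof -
      have "(y(0 := f *v y 0))(0 := mpow f m *v (y(0 := f *v y 0)) 0) = y(0 := mpow f m *v (f *v y 0))"
        by (simp add: fun_eq_iff)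
      moreover have "m \<le> d" using Suc.prems by simp
      ultimately show ?thesis using Suc.IH[of "y(0 := f *v y 0)"] by metis
    qed
    also have "mpow f m *v (f *v y 0) = mpow f (Suc m) *v y 0"
      by (simp add: matrix_vector_mul_assoc mpow_comm)
    finally show ?thesis .
  qed
qed

lemma powall: assumes f: "f \<in> cent \<Theta>"
  shows "\<Theta> (\<lambda>j. f *v y j) = \<Theta> (y(0 := mpow f d *v y 0))"
proof -
  have "\<Theta> (\<lambda>j. f *v y j) = \<Theta> (\<lambda>j. if j < d then f *v y j else y j)" by (rule loc) simp
  then show ?thesis using powm[OF f, of d y] by simp
qed

lemma idem_dich: assumes ind: "indecomposable_form d \<Theta>" and e: "e \<in> cent \<Theta>" "e ** e = e"
    and g: "mat 1 - e \<in> cent \<Theta>"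
  shows "e = 0 \<or> e = mat 1"
proof (rule ccontr)
  assume ne: "\<not> (e = 0 \<or> e = mat 1)"
  define g where "g = mat 1 - e"
  have gv: "g *v x = x - e *v x" for x by (simp add: g_def matrix_vector_mult_diff_rdistrib)
  have ee: "e *v (e *v x) = e *v x" for x using e(2) by (simp add: matrix_vector_mul_assoc)
  have gg: "g ** g = g" using e(2) by (simp add: g_def matrix_diff_ldistrib matrix_diff_rdistrib)
  have sub: "is_subspace (range ((*v) A))" for A :: "'k^'n^'n"
    unfolding is_subspace_def
  proof (intro conjI ballI allI)
    show "0 \<in> range ((*v) A)" by (rule range_eqI[of _ _ 0]) simp
    fix x y assume "x \<in> range ((*v) A)" "y \<in> range ((*v) A)"
    then obtain a b where "x = A *v a" "y = A *v b" by blast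
    then show "x + y \<in> range ((*v) A)" by (metis matrix_vector_right_distrib range_eqI)
  next
    fix c x assume "x \<in> range ((*v) A)"
    then obtain a where "x = A *v a" by blast
    then show "c *s x \<in> range ((*v) A)" by (metis vector_scalar_commute range_eqI)
  qed
  have nz: "range ((*v) A) \<noteq> {0}" if A0: "A \<noteq> 0" for A :: "'k^'n^'n"
  proof -
    obtain x where "A *v x \<noteq> 0 *v x" using A0 matrix_eq[of A 0] by blast
    then show ?thesis by auto
  qed
  have "decomposable_form d \<Theta>"
    unfolding decomposable_form_def
  proof (intro exI conjI allI impI)
    show "is_subspace (range ((*v) e))" "is_subspace (range ((*v) g))" by (rule sub)+
    show "range ((*v) e) \<noteq> {0}" using ne nz by auto
    show "range ((*v) g) \<noteq> {0}" using ne nz[of g] by (auto simp: g_def)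
    show "range ((*v) e) \<inter> range ((*v) g) = {0}"
    proof safe
      fix a b assume h: "e *v a = g *v b"
      have "e *v (e *v a) = e *v (g *v b)" using h by simp
      then have "e *v a = e *v b - e *v (e *v b)" by (simp add: ee gv matrix_vector_mult_diff_distrib)
      then show "e *v a = 0" by (simp add: ee)
    next
      show "0 \<in> range ((*v) e)" by (rule range_eqI[of _ _ 0]) simp
      show "0 \<in> range ((*v) g)" by (rule range_eqI[of _ _ 0]) simp
    qed
    fix x show "\<exists>a\<in>range ((*v) e). \<exists>b\<in>range ((*v) g). x = a + b"
      by (rule bexI[of _ "e *v x"], rule bexI[of _ "g *v x"]) (auto simp: gv)
  next
    fix v w :: "nat \<Rightarrow> 'k^'n"
    assume h: "\<forall>i<d. v i \<in> range ((*v) e) \<and> w i \<in> range ((*v) g)"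
    define y where "y = (\<lambda>i. v i + w i)"
    have ev: "e *v y i = v i" "g *v y i = w i" if id: "i < d" for i
    proof -
      obtain a b where ab: "v i = e *v a" "w i = g *v b" using h id by blast
      show "e *v y i = v i" "g *v y i = w i"
        using ab by (simp_all add: y_def matrix_vector_right_distrib gv ee matrix_vector_mult_diff_distrib)
    qed
    have d1: "d \<ge> 1" using d2 by simp
    have "\<Theta> v = \<Theta> (\<lambda>j. e *v y j)" by (rule loc) (simp add: ev)
    also have "\<dots> = \<Theta> (y(0 := e *v y 0))" using powall[OF e(1), of y] mpow_idem[OF e(2) d1] by simp
    finally have 1: "\<Theta> v = \<Theta> (y(0 := e *v y 0))" .
    have "\<Theta> w = \<Theta> (\<lambda>j. g *v y j)" by (rule loc) (simp add: ev)
    also have "\<dots> = \<Theta> (y(0 := g *v y 0))" using powall[OF g[folded g_def], of y] mpow_idem[OF gg d1] by simp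
    finally have 2: "\<Theta> w = \<Theta> (y(0 := g *v y 0))" .
    have "\<Theta> y = \<Theta> (y(0 := e *v y 0 + g *v y 0))" by (simp add: gv)
    then show "\<Theta> (\<lambda>i. v i + w i) = \<Theta> v + \<Theta> w" using 1 2 add0 by (simp add: y_def)
  qed
  then show False using ind unfolding indecomposable_form_def by blast
qed

lemma conj_slot:
  assumes orth: "\<forall>u. \<Theta> (\<lambda>i. \<sigma> *v u i) = \<Theta> u" and st: "\<sigma> ** \<tau> = mat 1"
  shows "\<Theta> (u(j := (\<sigma> ** f ** \<tau>) *v u j)) = \<Theta> ((\<lambda>i. \<tau> *v u i)(j := f *v (\<tau> *v u j)))"
proof -
  have "(\<lambda>i. \<sigma> *v ((\<lambda>i. \<tau> *v u i)(j := f *v (\<tau> *v u j))) i) = u(j := (\<sigma> ** f ** \<tau>) *v u j)"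
    by (auto simp: fun_eq_iff matrix_vector_mul_assoc st matrix_mul_assoc)
  then show ?thesis using orth by metis
qed

lemma conj_cent:
  assumes orth: "\<forall>u. \<Theta> (\<lambda>i. \<sigma> *v u i) = \<Theta> u" and st: "\<sigma> ** \<tau> = mat 1" and f: "f \<in> cent \<Theta>"
  shows "\<sigma> ** f ** \<tau> \<in> cent \<Theta>"
  unfolding cent_def
proof safe
  fix u :: "nat \<Rightarrow> 'k^'n"
  define w where "w = (\<lambda>i. \<tau> *v u i)"
  have "\<Theta> (u(0 := (\<sigma> ** f ** \<tau>) *v u 0)) = \<Theta> (w(0 := f *v w 0))"
    unfolding w_def by (rule conj_slot[OF orth st])
  also have "\<dots> = \<Theta> (w(1 := f *v w 1))" using f unfolding cent_def by blast
  also have "\<dots> = \<Theta> (u(1 := (\<sigma> ** f ** \<tau>) *v u 1))"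
    unfolding w_def by (rule conj_slot[OF orth st, symmetric])
  finally show "\<Theta> (u(0 := (\<sigma> ** f ** \<tau>) *v u 0)) = \<Theta> (u(1 := (\<sigma> ** f ** \<tau>) *v u 1))" .
qed

end

lemma inv_orth:
  fixes \<sigma> :: "'k::field^'n^'n" and \<Theta> :: "(nat \<Rightarrow> 'k^'n) \<Rightarrow> 'k"
  assumes orth: "\<forall>u. \<Theta> (\<lambda>i. \<sigma> *v u i) = \<Theta> u" and st: "\<sigma> ** \<tau> = mat 1"
  shows "\<forall>u. \<Theta> (\<lambda>i. \<tau> *v u i) = \<Theta> u"
proof
  fix u :: "nat \<Rightarrow> 'k^'n"
  have "\<Theta> (\<lambda>i. \<tau> *v u i) = \<Theta> (\<lambda>i. \<sigma> *v (\<tau> *v u i))" using orth by simp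
  also have "\<dots> = \<Theta> u" by (simp add: matrix_vector_mul_assoc st)
  finally show "\<Theta> (\<lambda>i. \<tau> *v u i) = \<Theta> u" .
qed

theorem theorem4p2:
  fixes \<Theta> :: "(nat \<Rightarrow> 'k::field_char_0 ^'n) \<Rightarrow> 'k" and d :: nat
  assumes "alg_closed_field TYPE('k)"
    and "d \<ge> 3"
    and "d_linear_form d \<Theta>" and "symmetric_form d \<Theta>"
    and "regular_form d \<Theta>" and "indecomposable_form d \<Theta>"
    and "has_maximal_center \<Theta>"
  shows "(\<forall>\<sigma>\<in>orth_group \<Theta>. chi \<sigma> \<in> alg_auts (cent \<Theta>))
    \<and> {\<sigma> \<in> orth_group \<Theta>. \<forall>f\<in>cent \<Theta>. chi \<sigma> f = f} = roots_of_unity_id d"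
proof -
  note alg = assms(1)
  interpret dform \<Theta> d using assms(2-4) by unfold_locales auto
  have max: "maximal_comm_subalgebra (cent \<Theta>)" using assms(7) unfolding has_maximal_center_def .
  have S: "comm_subalgebra (cent \<Theta>)" using max unfolding maximal_comm_subalgebra_def by blast
  have comm: "x ** y = y ** x" if "x \<in> cent \<Theta>" "y \<in> cent \<Theta>" for x y using S that unfolding comm_subalgebra_def by blast
  have matS: "mat c \<in> cent \<Theta>" for c
    using S unfolding comm_subalgebra_def by (metis mscale_mat1)
  have dich: "e = 0 \<or> e = mat 1" if eS: "e \<in> cent \<Theta>" and ee: "e ** e = e" for e
  proof -
    have "mat 1 - e = mat 1 + mscale (-1) e" by (simp add: mscale_def vec_eq_iff)
    moreover have "mscale (-1) e \<in> cent \<Theta>" using S eS unfolding comm_subalgebra_def by blast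
    ultimately have "mat 1 - e \<in> cent \<Theta>" using S unfolding comm_subalgebra_def by metis
    then show ?thesis using idem_dich[OF assms(6) eS ee] by blast
  qed
  have part1: "chi \<sigma> \<in> alg_auts (cent \<Theta>)" if sO: "\<sigma> \<in> orth_group \<Theta>" for \<sigma>
  proof -
    define \<tau> where "\<tau> = matrix_inv \<sigma>"
    have inv: "invertible \<sigma>" and orth: "\<forall>u. \<Theta> (\<lambda>i. \<sigma> *v u i) = \<Theta> u" using sO unfolding orth_group_def by auto
    have st: "\<sigma> ** \<tau> = mat 1" and ts: "\<tau> ** \<sigma> = mat 1" using minv[OF inv] by (auto simp: \<tau>_def)
    have orth2: "\<forall>u. \<Theta> (\<lambda>i. \<tau> *v u i) = \<Theta> u" by (rule inv_orth[OF orth st])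
    have tsZ: "\<tau> ** (\<sigma> ** Z) = Z" for Z by (simp add: matrix_mul_assoc ts)
    have stZ: "\<sigma> ** (\<tau> ** Z) = Z" for Z by (simp add: matrix_mul_assoc st)
    have chi_eq: "chi \<sigma> f = \<sigma> ** f ** \<tau>" for f by (simp add: chi_def \<tau>_def)
    show ?thesis
      unfolding alg_auts_def
    proof (intro CollectI conjI ballI allI)
      show "bij_betw (chi \<sigma>) (cent \<Theta>) (cent \<Theta>)"
      proof (rule bij_betwI[where g = "\<lambda>x. \<tau> ** x ** \<sigma>"])
        show "chi \<sigma> \<in> cent \<Theta> \<rightarrow> cent \<Theta>" using conj_cent[OF orth st] by (auto simp: chi_eq)
        show "(\<lambda>x. \<tau> ** x ** \<sigma>) \<in> cent \<Theta> \<rightarrow> cent \<Theta>" using conj_cent[OF orth2 ts] by auto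
        fix x show "\<tau> ** chi \<sigma> x ** \<sigma> = x" by (simp add: chi_eq matrix_mul_assoc[symmetric] tsZ ts)
      next
        fix y show "chi \<sigma> (\<tau> ** y ** \<sigma>) = y" by (simp add: chi_eq matrix_mul_assoc[symmetric] stZ st)
      qed
      show "chi \<sigma> (mat 1) = mat 1" by (simp add: chi_eq st)
      fix x y
      show "chi \<sigma> (x + y) = chi \<sigma> x + chi \<sigma> y" by (simp add: chi_eq matrix_add_ldistrib matrix_add_rdistrib')
      show "chi \<sigma> (x ** y) = chi \<sigma> x ** chi \<sigma> y" by (simp add: chi_eq matrix_mul_assoc[symmetric] tsZ)
    next
      fix c x show "chi \<sigma> (mscale c x) = mscale c (chi \<sigma> x)" by (simp add: chi_eq mscale_l mscale_r)
    qed
  qed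
  have sub: "\<sigma> \<in> roots_of_unity_id d" if sO: "\<sigma> \<in> orth_group \<Theta>" and fx: "\<forall>f\<in>cent \<Theta>. chi \<sigma> f = f" for \<sigma>
  proof -
    define \<tau> where "\<tau> = matrix_inv \<sigma>"
    have inv: "invertible \<sigma>" and orth: "\<forall>u. \<Theta> (\<lambda>i. \<sigma> *v u i) = \<Theta> u" using sO unfolding orth_group_def by auto
    have st: "\<sigma> ** \<tau> = mat 1" and ts: "\<tau> ** \<sigma> = mat 1" using minv[OF inv] by (auto simp: \<tau>_def)
    have sc: "\<sigma> ** f = f ** \<sigma>" if fS: "f \<in> cent \<Theta>" for f
    proof -
      have "\<sigma> ** f ** \<tau> = f" using fx fS by (simp add: chi_def \<tau>_def)
      then have "\<sigma> ** f ** \<tau> ** \<sigma> = f ** \<sigma>" by simp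
      then show ?thesis by (simp add: matrix_mul_assoc[symmetric] ts)
    qed
    define T where "T = insert \<sigma> (cent \<Theta>)"
    define C1 where "C1 = {x. \<forall>y\<in>T. x ** y = y ** x}"
    define C2 where "C2 = {x. \<forall>y\<in>C1. x ** y = y ** x}"
    have TC1: "T \<subseteq> C1" unfolding T_def C1_def using comm sc by auto
    have C21: "C2 \<subseteq> C1" unfolding C2_def C1_def using TC1 unfolding C1_def by auto
    have cC2: "cent \<Theta> \<subseteq> C2" unfolding C2_def C1_def T_def by auto
    have sC2: "\<sigma> \<in> C2" unfolding C2_def C1_def T_def by auto
    have "comm_subalgebra C2"
      unfolding comm_subalgebra_def
    proof (intro conjI ballI allI)
      show "mat 1 \<in> C2" unfolding C2_def by simp
      fix x y assume x: "x \<in> C2" and y: "y \<in> C2"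
      show "x + y \<in> C2" using x y unfolding C2_def by (simp add: matrix_add_ldistrib matrix_add_rdistrib')
      show "x ** y \<in> C2" using x y unfolding C2_def by (simp add: matrix_mul_assoc) (metis matrix_mul_assoc)
      show "x ** y = y ** x" using x y C21 unfolding C2_def by auto
    next
      fix c x assume x: "x \<in> C2"
      show "mscale c x \<in> C2" using x unfolding C2_def by (simp add: mscale_l mscale_r)
    qed
    then have "C2 = cent \<Theta>" using max cC2 unfolding maximal_comm_subalgebra_def by blast
    then have sS: "\<sigma> \<in> cent \<Theta>" using sC2 by simp
    have pw: "mpow \<sigma> d = mat 1"
    proof -
      have "mpow \<sigma> d *v x = x" for x
      proof -
        have "\<forall>u. \<Theta> (u(0 := mpow \<sigma> d *v x - x)) = 0"
        proof
          fix u :: "nat \<Rightarrow> 'k^'n"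
          have "\<Theta> (u(0 := mpow \<sigma> d *v x)) = \<Theta> (\<lambda>j. \<sigma> *v (u(0 := x)) j)"
            using powall[OF sS, of "u(0 := x)"] by simp
          also have "\<dots> = \<Theta> (u(0 := x))" using orth by blast
          finally show "\<Theta> (u(0 := mpow \<sigma> d *v x - x)) = 0" by (simp add: diff0)
        qed
        then show ?thesis using assms(5) unfolding regular_form_def by auto
      qed
      then show ?thesis by (simp add: matrix_eq)
    qed
    define p :: "'k poly" where "p = monom 1 d - [:1:]"
    have d1: "d \<ge> 1" using assms(2) by simp
    have p0: "p \<noteq> 0"
    proof
      assume "p = 0"
      then have "coeff (monom 1 d) d = coeff [:(1::'k):] d" unfolding p_def by simp
      then show False using d1 by (simp add: coeff_pCons split: nat.splits)
    qed
    have roots: "\<forall>z. poly p z = 0 \<longrightarrow> poly (pderiv p) z \<noteq> 0"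
    proof (intro allI impI)
      fix z assume "poly p z = 0"
      then have zd: "z ^ d = 1" by (simp add: p_def poly_monom)
      then have "z \<noteq> 0" using d1 by (cases d) auto
      then show "poly (pderiv p) z \<noteq> 0" using d1 by (simp add: p_def pderiv_diff pderiv_monom poly_monom)
    qed
    have "mev p \<sigma> = 0" by (simp add: p_def mev_diff mev_monom mev_const pw)
    then obtain c where c: "\<sigma> = mat c" using scalar_of_root[OF alg S sS, of p] dich p0 roots by blast
    then have "mat (c ^ d) = (mat 1 :: 'k^'n^'n)" using pw by (simp add: mpow_mat)
    then have "c ^ d = 1" by (rule mat_inj)
    then show ?thesis using c unfolding roots_of_unity_id_def by blast
  qed
  have sup: "\<sigma> \<in> orth_group \<Theta> \<and> (\<forall>f\<in>cent \<Theta>. chi \<sigma> f = f)" if r: "\<sigma> \<in> roots_of_unity_id d" for \<sigma>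
  proof -
    obtain z where z: "\<sigma> = mat z" "z ^ d = 1" using r unfolding roots_of_unity_id_def by blast
    have z0: "z \<noteq> 0" using z(2) assms(2) by (cases d) auto
    have inv: "invertible \<sigma>" unfolding invertible_def z(1)
      by (rule exI[of _ "mat (1/z)"]) (simp add: mat_mat z0)
    have "\<Theta> (\<lambda>i. \<sigma> *v u i) = \<Theta> u" for u
      using powall[OF matS[of z], of u] by (simp add: z mpow_mat)
    then have "\<sigma> \<in> orth_group \<Theta>" using inv unfolding orth_group_def by blast
    moreover have "chi \<sigma> f = f" for f
    proof -
      have "chi \<sigma> f = f ** (\<sigma> ** matrix_inv \<sigma>)" unfolding chi_def z(1) by (metis mat_comm matrix_mul_assoc)
      then show ?thesis using minv[OF inv] by simp
    qed
    ultimately show ?thesis by blast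
  qed
  show ?thesis using part1 sub sup by blast
qed

end
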